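(* Let $\mathcal T$ be an orbital category and $\mathcal C$ a $\mathcal T$-weak indexing system. Then: (1) $\mathcal C$ has one color if and only if $c(\mathcal C)=\mathcal T$; (2) $\mathcal C$ satisfies the condition "for all $S\sqcup S'\in\mathcal C_V$, $S,S'\in\mathcal C_V$" if and only if $\upsilon(\mathcal C)=c(\mathcal C)$; (3) $\mathcal C$ is unital if and only if $\upsilon(\mathcal C)=\mathcal T$; (4) $\mathcal C$ is an indexing system if and only if $\upsilon(\mathcal C)\cap\nabla(\mathcal C)=\mathcal T$.
   Context: For a small category $\mathcal T$, $\mathbb F_{\mathcal T}$ is the full subcategory of $\mathrm{Fun}(\mathcal T^{op},\mathrm{Set})$ on finite coproducts of representables; $\mathcal T$ is orbital if $\mathbb F_{\mathcal T}$ has pullbacks. $\mathbb F_V:=\mathbb F_{\mathcal T,/V}$, $*_V$ terminal, $\emptyset_V$ initial, $n\cdot S$ the $n$-fold coproduct; for $U\to V$ in $\mathcal T$, $\mathrm{Res}^V_U$ is pullback and $\mathrm{Ind}^V_U$ postcomposition. A full $\mathcal T$-subcategory $\mathcal C$ assigns isomorphism-closed classes $\mathcal C_V\subseteq\mathrm{Ob}\,\mathbb F_V$ stable under all restrictions. For $S\in\mathbb F_V$ with orbits $U\in\mathrm{Orb}(S)$ and $T_U\in\mathbb F_U$, $\coprod_U^ST_U:=\coprod_U\mathrm{Ind}_U^VT_U$. A $\mathcal T$-weak indexing system is a full $\mathcal T$-subcategory $\mathcal C$ with $\mathcal C_V\neq\emptyset\Rightarrow *_V\in\mathcal C_V$ and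 closed under $\coprod^S_U T_U$ for $S\in\mathcal C_V$, $T_U\in\mathcal C_U$. It has one color if $\mathcal C_V\neq\emptyset$ for all $V$; it is unital if it has one color and $S\sqcup S'\in\mathcal C_V$ implies $S,S'\in\mathcal C_V$; it is an indexing system if every $\mathcal C_V$ is closed under finite coproducts in $\mathbb F_V$. $c(\mathcal C)=\{V\mid *_V\in\mathcal C_V\}$, $\upsilon(\mathcal C)=\{V\mid\emptyset_V\in\mathcal C_V\}$, $\nabla(\mathcal C)=\{V\mid 2\cdot *_V\in\mathcal C_V\}$. *)

theory Defs
  imports Main
begin

text \<open>Morphisms are labels of type 'm; a morphism is always used together with its
  typing f : A -> B, so the structure is a genuine category (morphisms = triples).\<close>

record ('o, 'm) cat =
  Ob  :: "'o set"
  Hom :: "'o \<Rightarrow> 'o \<Rightarrow> 'm set"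
  cmp :: "'m \<Rightarrow> 'm \<Rightarrow> 'm"   (* cmp g f = g o f *)
  idt :: "'o \<Rightarrow> 'm"

definition category :: "('o, 'm) cat \<Rightarrow> bool" where
  "category T \<longleftrightarrow>
     (\<forall>A B. Hom T A B \<noteq> {} \<longrightarrow> A \<in> Ob T \<and> B \<in> Ob T) \<and>
     (\<forall>A\<in>Ob T. idt T A \<in> Hom T A A) \<and>
     (\<forall>A B C f g. f \<in> Hom T A B \<longrightarrow> g \<in> Hom T B C \<longrightarrow> cmp T g f \<in> Hom T A C) \<and>
     (\<forall>A B f. f \<in> Hom T A B \<longrightarrow> cmp T (idt T B) f = f \<and> cmp T f (idt T A) = f) \<and>
     (\<forall>A B C D f g h. f \<in> Hom T A B \<longrightarrow> g \<in> Hom T B C \<longrightarrow> h \<in> Hom T C D \<longrightarrow>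
        cmp T h (cmp T g f) = cmp T (cmp T h g) f)"

text \<open>By Yoneda, F_T is (equivalent to) the free finite-coproduct completion of T:
  an object is a finite list of objects of T (the coproduct of their representables),
  a morphism xs -> ys is a function f on indices together with, for each index i,
  a morphism xs!i -> ys!(f i) in T.\<close>

type_synonym 'm fmor = "(nat \<Rightarrow> nat) \<times> (nat \<Rightarrow> 'm)"

definition FOb :: "('o, 'm) cat \<Rightarrow> 'o list set" where
  "FOb T = {xs. set xs \<subseteq> Ob T}"

definition FHom :: "('o, 'm) cat \<Rightarrow> 'o list \<Rightarrow> 'o list \<Rightarrow> 'm fmor set" where
  "FHom T xs ys = {(f, g). \<forall>i<length xs. f i < length ys \<and> g i \<in> Hom T (xs ! i) (ys ! (f i))}"

definition feq :: "'o list \<Rightarrow> 'm fmor \<Rightarrow> 'm fmor \<Rightarrow> bool" where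
  "feq xs a b \<longleftrightarrow> (\<forall>i<length xs. fst a i = fst b i \<and> snd a i = snd b i)"

definition fcmp :: "('o, 'm) cat \<Rightarrow> 'm fmor \<Rightarrow> 'm fmor \<Rightarrow> 'm fmor" where
  "fcmp T b a = (fst b \<circ> fst a, \<lambda>i. cmp T (snd b (fst a i)) (snd a i))"

definition fid :: "('o, 'm) cat \<Rightarrow> 'o list \<Rightarrow> 'm fmor" where
  "fid T xs = (\<lambda>i. i, \<lambda>i. idt T (xs ! i))"

definition is_pullback :: "('o, 'm) cat \<Rightarrow> 'o list \<Rightarrow> 'o list \<Rightarrow> 'o list \<Rightarrow>
    'm fmor \<Rightarrow> 'm fmor \<Rightarrow> 'o list \<Rightarrow> 'm fmor \<Rightarrow> 'm fmor \<Rightarrow> bool" where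
  "is_pullback T A B C p q P a b \<longleftrightarrow>
     P \<in> FOb T \<and> a \<in> FHom T P A \<and> b \<in> FHom T P B \<and>
     feq P (fcmp T p a) (fcmp T q b) \<and>
     (\<forall>X\<in>FOb T. \<forall>x1 x2. x1 \<in> FHom T X A \<longrightarrow> x2 \<in> FHom T X B \<longrightarrow>
        feq X (fcmp T p x1) (fcmp T q x2) \<longrightarrow>
        (\<exists>u\<in>FHom T X P. feq X (fcmp T a u) x1 \<and> feq X (fcmp T b u) x2 \<and>
           (\<forall>u'\<in>FHom T X P. feq X (fcmp T a u') x1 \<and> feq X (fcmp T b u') x2 \<longrightarrow> feq X u u')))"

definition orbital :: "('o, 'm) cat \<Rightarrow> bool" where
  "orbital T \<longleftrightarrow>
     (\<forall>A\<in>FOb T. \<forall>B\<in>FOb T. \<forall>C\<in>FOb T. \<forall>p q. p \<in> FHom T A C \<longrightarrow> q \<in> FHom T B C \<longrightarrow>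
        (\<exists>P a b. is_pullback T A B C p q P a b))"

definition FVOb :: "('o, 'm) cat \<Rightarrow> 'o \<Rightarrow> ('o \<times> 'm) list set" where
  "FVOb T V = {S. V \<in> Ob T \<and> (\<forall>(U, m)\<in>set S. m \<in> Hom T U V)}"

definition fobj :: "('o \<times> 'm) list \<Rightarrow> 'o list" where
  "fobj S = map fst S"

text \<open>Structure map of S in F_T, from fobj S to [V].\<close>
definition str :: "('o \<times> 'm) list \<Rightarrow> 'm fmor" where
  "str S = (\<lambda>_. 0, \<lambda>i. snd (S ! i))"

definition viso :: "('o, 'm) cat \<Rightarrow> ('o \<times> 'm) list \<Rightarrow> ('o \<times> 'm) list \<Rightarrow> bool" where
  "viso T S S' \<longleftrightarrow>
     (\<exists>\<phi> \<psi>. \<phi> \<in> FHom T (fobj S) (fobj S') \<and> \<psi> \<in> FHom T (fobj S') (fobj S) \<and>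
        feq (fobj S) (fcmp T (str S') \<phi>) (str S) \<and> feq (fobj S') (fcmp T (str S) \<psi>) (str S') \<and>
        feq (fobj S) (fcmp T \<psi> \<phi>) (fid T (fobj S)) \<and> feq (fobj S') (fcmp T \<phi> \<psi>) (fid T (fobj S')))"

text \<open>R (in F_U) is a restriction Res^V_U S of S (in F_V) along h : U -> V:
  R is a pullback of fobj S -> [V] <- [U] in F_T, with R -> [U] its structure map.\<close>
definition is_restriction :: "('o, 'm) cat \<Rightarrow> 'o \<Rightarrow> 'o \<Rightarrow> 'm \<Rightarrow>
    ('o \<times> 'm) list \<Rightarrow> ('o \<times> 'm) list \<Rightarrow> bool" where
  "is_restriction T U V h S R \<longleftrightarrow> R \<in> FVOb T U \<and>
     (\<exists>a. is_pullback T (fobj S) [U] [V] (str S) (\<lambda>_. 0, \<lambda>_. h) (fobj R) a (str R))"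

definition Ind :: "('o, 'm) cat \<Rightarrow> 'm \<Rightarrow> ('o \<times> 'm) list \<Rightarrow> ('o \<times> 'm) list" where
  "Ind T h S = map (\<lambda>(W, m). (W, cmp T h m)) S"

definition terminal :: "('o, 'm) cat \<Rightarrow> 'o \<Rightarrow> ('o \<times> 'm) list" where
  "terminal T V = [(V, idt T V)]"

definition orbit_coprod :: "('o, 'm) cat \<Rightarrow> ('o \<times> 'm) list \<Rightarrow> (nat \<Rightarrow> ('o \<times> 'm) list)
    \<Rightarrow> ('o \<times> 'm) list" where
  "orbit_coprod T S Ts = concat (map (\<lambda>i. Ind T (snd (S ! i)) (Ts i)) [0..<length S])"

type_synonym ('o, 'm) tsubcat = "'o \<Rightarrow> ('o \<times> 'm) list set"

definition full_T_subcategory :: "('o, 'm) cat \<Rightarrow> ('o, 'm) tsubcat \<Rightarrow> bool" where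
  "full_T_subcategory T C \<longleftrightarrow>
     (\<forall>V. C V \<subseteq> FVOb T V) \<and>
     (\<forall>V S S'. S \<in> C V \<longrightarrow> S' \<in> FVOb T V \<longrightarrow> viso T S S' \<longrightarrow> S' \<in> C V) \<and>
     (\<forall>U V h S R. h \<in> Hom T U V \<longrightarrow> S \<in> C V \<longrightarrow> is_restriction T U V h S R \<longrightarrow> R \<in> C U)"

definition weak_indexing_system :: "('o, 'm) cat \<Rightarrow> ('o, 'm) tsubcat \<Rightarrow> bool" where
  "weak_indexing_system T C \<longleftrightarrow> full_T_subcategory T C \<and>
     (\<forall>V. C V \<noteq> {} \<longrightarrow> terminal T V \<in> C V) \<and>
     (\<forall>V S Ts. S \<in> C V \<longrightarrow> (\<forall>i<length S. Ts i \<in> C (fst (S ! i))) \<longrightarrow>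
        orbit_coprod T S Ts \<in> C V)"

definition one_color :: "('o, 'm) cat \<Rightarrow> ('o, 'm) tsubcat \<Rightarrow> bool" where
  "one_color T C \<longleftrightarrow> (\<forall>V\<in>Ob T. C V \<noteq> {})"

definition summand_closed :: "('o, 'm) tsubcat \<Rightarrow> bool" where
  "summand_closed C \<longleftrightarrow> (\<forall>V S S'. S @ S' \<in> C V \<longrightarrow> S \<in> C V \<and> S' \<in> C V)"

definition unital :: "('o, 'm) cat \<Rightarrow> ('o, 'm) tsubcat \<Rightarrow> bool" where
  "unital T C \<longleftrightarrow> one_color T C \<and> summand_closed C"

definition indexing_system :: "('o, 'm) cat \<Rightarrow> ('o, 'm) tsubcat \<Rightarrow> bool" where
  "indexing_system T C \<longleftrightarrow> weak_indexing_system T C \<and>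
     (\<forall>V\<in>Ob T. [] \<in> C V \<and> (\<forall>S S'. S \<in> C V \<longrightarrow> S' \<in> C V \<longrightarrow> S @ S' \<in> C V))"

definition colors :: "('o, 'm) cat \<Rightarrow> ('o, 'm) tsubcat \<Rightarrow> 'o set" where
  "colors T C = {V \<in> Ob T. terminal T V \<in> C V}"

definition upsilon :: "('o, 'm) cat \<Rightarrow> ('o, 'm) tsubcat \<Rightarrow> 'o set" where
  "upsilon T C = {V \<in> Ob T. [] \<in> C V}"

definition nabla :: "('o, 'm) cat \<Rightarrow> ('o, 'm) tsubcat \<Rightarrow> 'o set" where
  "nabla T C = {V \<in> Ob T. terminal T V @ terminal T V \<in> C V}"

end

theory Submission
  imports Defs
begin

lemma feq_fcmp_cong:
  assumes "u \<in> FHom T X P" and "\<forall>i<length P. fst b i = fst b' i \<and> snd b i = snd b' i"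
  shows "feq X (fcmp T b' u) y = feq X (fcmp T b u) y"
proof -
  have "\<forall>i<length X. fst u i < length P" using assms(1) by (auto simp: FHom_def)
  then show ?thesis using assms(2) by (auto simp: feq_def fcmp_def)
qed

lemma is_pullback_cong:
  assumes pb: "is_pullback T A B C p q P a b"
    and ag: "\<forall>i<length P. fst b i = fst b' i \<and> snd b i = snd b' i"
  shows "is_pullback T A B C p q P a b'"
proof -
  have h1: "b' \<in> FHom T P B" using pb ag unfolding is_pullback_def FHom_def by auto
  have h2: "feq P (fcmp T p a) (fcmp T q b')" using pb ag unfolding is_pullback_def feq_def fcmp_def
    by auto
  have eq: "\<And>X u y. u \<in> FHom T X P \<Longrightarrow> feq X (fcmp T b' u) y = feq X (fcmp T b u) y"
    using feq_fcmp_cong[OF _ ag] by blast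
  show ?thesis unfolding is_pullback_def
  proof (intro conjI ballI allI impI)
    show "P \<in> FOb T" "a \<in> FHom T P A" using pb unfolding is_pullback_def by blast+
    show "b' \<in> FHom T P B" by (rule h1)
    show "feq P (fcmp T p a) (fcmp T q b')" by (rule h2)
    fix X x1 x2 assume X: "X \<in> FOb T" and x1: "x1 \<in> FHom T X A" and x2: "x2 \<in> FHom T X B"
      and c: "feq X (fcmp T p x1) (fcmp T q x2)"
    obtain u where u: "u \<in> FHom T X P" "feq X (fcmp T a u) x1" "feq X (fcmp T b u) x2"
      and un: "\<forall>u'\<in>FHom T X P. feq X (fcmp T a u') x1 \<and> feq X (fcmp T b u') x2 \<longrightarrow> feq X u u'"
      using pb X x1 x2 c unfolding is_pullback_def by meson
    show "\<exists>u\<in>FHom T X P. feq X (fcmp T a u) x1 \<and> feq X (fcmp T b' u) x2 \<and>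
           (\<forall>u'\<in>FHom T X P. feq X (fcmp T a u') x1 \<and> feq X (fcmp T b' u') x2 \<longrightarrow> feq X u u')"
      using u un eq by blast
  qed
qed

lemma cat_ob:
  assumes "category T" "f \<in> Hom T A B"
  shows "A \<in> Ob T" "B \<in> Ob T"
proof -
  have "\<forall>A B. Hom T A B \<noteq> {} \<longrightarrow> A \<in> Ob T \<and> B \<in> Ob T"
    using assms(1) unfolding category_def by (rule conjunct1)
  then show "A \<in> Ob T" "B \<in> Ob T" using assms(2) by blast+
qed

lemma restriction_exists:
  assumes cat: "category T" and orb: "orbital T" and h: "h \<in> Hom T U V" and S: "S \<in> FVOb T V"
  shows "\<exists>R. is_restriction T U V h S R"
proof -
  have UV: "U \<in> Ob T" "V \<in> Ob T" using cat_ob[OF cat h] by blast+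
  have A: "fobj S \<in> FOb T" unfolding FOb_def fobj_def mem_Collect_eq
  proof (rule subsetI)
    fix x assume "x \<in> set (map fst S)"
    then obtain m where "(x, m) \<in> set S" by auto
    then have "m \<in> Hom T x V" using S unfolding FVOb_def by auto
    then show "x \<in> Ob T" using cat_ob[OF cat] by blast
  qed
  have B: "[U] \<in> FOb T" "[V] \<in> FOb T" using UV by (auto simp: FOb_def)
  have p: "str S \<in> FHom T (fobj S) [V]" using S
    by (auto simp: FHom_def str_def fobj_def FVOb_def)
  have q: "((\<lambda>_. 0, \<lambda>_. h) :: 'b fmor) \<in> FHom T [U] [V]" using h by (auto simp: FHom_def)
  obtain P a b where pb: "is_pullback T (fobj S) [U] [V] (str S) (\<lambda>_. 0, \<lambda>_. h) P a b"
    using orb[unfolded orbital_def, rule_format, OF A B(1) B(2) p q] by blast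
  define R where "R = map (\<lambda>i. (P ! i, snd b i)) [0..<length P]"
  have bF: "b \<in> FHom T P [U]" using pb by (simp add: is_pullback_def)
  have fR: "fobj R = P" unfolding R_def fobj_def by (rule nth_equalityI) auto
  have RV: "R \<in> FVOb T U" using UV bF by (auto simp: R_def FVOb_def FHom_def)
  have ag: "\<forall>i<length (fobj R). fst b i = fst (str R) i \<and> snd b i = snd (str R) i"
    using bF fR by (auto simp: FHom_def str_def R_def)
  have "is_pullback T (fobj S) [U] [V] (str S) (\<lambda>_. 0, \<lambda>_. h) (fobj R) a (str R)"
    using is_pullback_cong[OF pb[folded fR] ag] .
  then show ?thesis using RV unfolding is_restriction_def by blast
qed


lemma concat_if_filter:
  "concat (map (\<lambda>i. if P i then [L!i] else []) xs) = map (nth L) (filter P xs)"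
  by (induction xs) auto

lemma map_nth_take: "n \<le> length L \<Longrightarrow> map (nth L) [0..<n] = take n L"
  by (rule nth_equalityI) auto

lemma map_nth_drop: "n \<le> length L \<Longrightarrow> map (nth L) [n..<length L] = drop n L"
  by (rule nth_equalityI) auto

lemma filter_split_lt:
  assumes "n \<le> m"
  shows "filter (\<lambda>i. i < n) [0..<m] = [0..<n]" "filter (\<lambda>i. \<not> i < n) [0..<m] = [n..<m]"
proof -
  have e: "[0..<m] = [0..<n] @ [n..<m]" using assms
    by (metis le0 upt_add_eq_append le_add_diff_inverse)
  show "filter (\<lambda>i. i < n) [0..<m] = [0..<n]" unfolding e
    by (auto simp: filter_True filter_False)
  show "filter (\<lambda>i. \<not> i < n) [0..<m] = [n..<m]" unfolding e
    by (auto simp: filter_True filter_False)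
qed

lemma Ind_terminal:
  assumes "category T" "h \<in> Hom T U V"
  shows "Ind T h (terminal T U) = [(U, h)]"
  using assms unfolding category_def Ind_def terminal_def by auto

lemma Ind_id:
  assumes "category T" "S \<in> FVOb T V"
  shows "Ind T (idt T V) S = S"
proof -
  have "\<forall>x\<in>set S. (\<lambda>(W, m). (W, cmp T (idt T V) m)) x = x"
    using assms unfolding category_def FVOb_def by auto
  then show ?thesis unfolding Ind_def by (simp add: map_idI)
qed

lemma orbit_coprod_sel:
  assumes cat: "category T" and L: "L \<in> FVOb T V"
  shows "orbit_coprod T L (\<lambda>i. if P i then terminal T (fst (L ! i)) else [])
         = map (nth L) (filter P [0..<length L])"
proof -
  have H: "\<forall>i\<in>set [0..<length L]. Ind T (snd (L ! i)) (if P i then terminal T (fst (L ! i)) else [])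
         = (if P i then [L!i] else [])"
  proof
    fix i assume "i \<in> set [0..<length L]"
    then have "L ! i \<in> set L" by simp
    then have "snd (L!i) \<in> Hom T (fst (L!i)) V" using L unfolding FVOb_def by auto
    then show "Ind T (snd (L ! i)) (if P i then terminal T (fst (L ! i)) else [])
         = (if P i then [L!i] else [])"
      using Ind_terminal[OF cat] by (auto simp: Ind_def)
  qed
  have M: "map (\<lambda>i. Ind T (snd (L ! i)) (if P i then terminal T (fst (L ! i)) else [])) [0..<length L]
     = map (\<lambda>i. if P i then [L!i] else []) [0..<length L]"
    by (subst map_eq_conv) (rule H)
  show ?thesis unfolding orbit_coprod_def concat_if_filter[symmetric] M by (rule refl)
qed

theorem mainTheorem6:
  fixes T :: "('o, 'm) cat" and C :: "('o, 'm) tsubcat"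
  assumes "category T" and "orbital T" and "weak_indexing_system T C"
  shows "(one_color T C \<longleftrightarrow> colors T C = Ob T) \<and>
         (summand_closed C \<longleftrightarrow> upsilon T C = colors T C) \<and>
         (unital T C \<longleftrightarrow> upsilon T C = Ob T) \<and>
         (indexing_system T C \<longleftrightarrow> upsilon T C \<inter> nabla T C = Ob T)"
proof -
  note cat = assms(1) and orb = assms(2) and W = assms(3)
  have sub: "\<And>V. C V \<subseteq> FVOb T V" and res: "\<And>U V h S R. h \<in> Hom T U V \<Longrightarrow> S \<in> C V \<Longrightarrow>
      is_restriction T U V h S R \<Longrightarrow> R \<in> C U"
  proof -
    have F: "full_T_subcategory T C" using W unfolding weak_indexing_system_def by (rule conjunct1)
    show "\<And>V. C V \<subseteq> FVOb T V" using F unfolding full_T_subcategory_def by (rule conjunct1[THEN spec])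
    show "\<And>U V h S R. h \<in> Hom T U V \<Longrightarrow> S \<in> C V \<Longrightarrow>
      is_restriction T U V h S R \<Longrightarrow> R \<in> C U"
      using F unfolding full_T_subcategory_def by (elim conjE) blast
  qed
  have trm: "\<And>V. C V \<noteq> {} \<Longrightarrow> terminal T V \<in> C V"
    using W unfolding weak_indexing_system_def by blast
  have oc: "\<And>V S Ts. S \<in> C V \<Longrightarrow> (\<forall>i<length S. Ts i \<in> C (fst (S ! i))) \<Longrightarrow>
        orbit_coprod T S Ts \<in> C V"
    using W unfolding weak_indexing_system_def by blast
  have ob: "\<And>V S. S \<in> C V \<Longrightarrow> V \<in> Ob T" using sub unfolding FVOb_def by blast
  have P1: "one_color T C \<longleftrightarrow> colors T C = Ob T"
  proof
    assume "one_color T C"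
    then have "\<And>V. V \<in> Ob T \<Longrightarrow> terminal T V \<in> C V" unfolding one_color_def using trm by blast
    then show "colors T C = Ob T" unfolding colors_def by auto
  next
    assume "colors T C = Ob T"
    then have "\<And>V. V \<in> Ob T \<Longrightarrow> terminal T V \<in> C V" unfolding colors_def by auto
    then show "one_color T C" unfolding one_color_def by blast
  qed
  have P2: "summand_closed C \<longleftrightarrow> upsilon T C = colors T C"
  proof
    assume sc: "summand_closed C"
    show "upsilon T C = colors T C"
    proof
      show "upsilon T C \<subseteq> colors T C" unfolding upsilon_def colors_def using trm by blast
      show "colors T C \<subseteq> upsilon T C" unfolding upsilon_def colors_def
        using sc unfolding summand_closed_def by (metis (mono_tags, lifting) Collect_mono append_Nil2)
    qed
  next
    assume eq: "upsilon T C = colors T C"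
    show "summand_closed C" unfolding summand_closed_def
    proof (intro allI impI)
      fix V S S' assume L: "S @ S' \<in> C V"
      define L where "L = S @ S'"
      have LF: "L \<in> FVOb T V" using L sub L_def by blast
      have orbs: "\<forall>i<length L. terminal T (fst (L!i)) \<in> C (fst (L!i)) \<and> [] \<in> C (fst (L!i))"
      proof (intro allI impI)
        fix i assume i: "i < length L"
        obtain U h where Uh: "L ! i = (U, h)" by fastforce
        have "(U, h) \<in> set L" using i Uh by (metis nth_mem)
        then have h: "h \<in> Hom T U V" using LF unfolding FVOb_def by auto
        obtain R where "is_restriction T U V h L R"
          using restriction_exists[OF cat orb h LF] by blast
        then have "R \<in> C U" using res h L L_def by blast
        then have t: "terminal T U \<in> C U" and "U \<in> Ob T" using trm ob by blast+
        then have "U \<in> upsilon T C" using eq unfolding colors_def by blast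
        then have "[] \<in> C U" unfolding upsilon_def by blast
        then show "terminal T (fst (L!i)) \<in> C (fst (L!i)) \<and> [] \<in> C (fst (L!i))"
          using t Uh by simp
      qed
      have n: "length S \<le> length L" unfolding L_def by simp
      have "orbit_coprod T L (\<lambda>i. if i < length S then terminal T (fst (L ! i)) else []) \<in> C V"
        using oc[of L V] L L_def orbs by auto
      moreover have "orbit_coprod T L (\<lambda>i. if i < length S then terminal T (fst (L ! i)) else []) = S"
        unfolding orbit_coprod_sel[OF cat LF] filter_split_lt[OF n] map_nth_take[OF n]
        by (simp add: L_def)
      moreover have "orbit_coprod T L (\<lambda>i. if \<not> i < length S then terminal T (fst (L ! i)) else []) \<in> C V"
        using oc[of L V] L L_def orbs by auto
      moreover have "orbit_coprod T L (\<lambda>i. if \<not> i < length S then terminal T (fst (L ! i)) else []) = S'"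
        unfolding orbit_coprod_sel[OF cat LF] filter_split_lt[OF n] map_nth_drop[OF n]
        by (simp add: L_def)
      ultimately show "S \<in> C V \<and> S' \<in> C V" by simp
    qed
  qed
  have P3: "unital T C \<longleftrightarrow> upsilon T C = Ob T"
  proof
    assume "unital T C"
    then show "upsilon T C = Ob T" using P1 P2 unfolding unital_def by simp
  next
    assume u: "upsilon T C = Ob T"
    then have "one_color T C" unfolding one_color_def upsilon_def by blast
    then have "colors T C = Ob T" using P1 by simp
    then show "unital T C" using P2 u \<open>one_color T C\<close> unfolding unital_def by simp
  qed
  have P4: "indexing_system T C \<longleftrightarrow> upsilon T C \<inter> nabla T C = Ob T"
  proof
    assume "indexing_system T C"
    then have "\<forall>V\<in>Ob T. [] \<in> C V \<and> (\<forall>S S'. S \<in> C V \<longrightarrow> S' \<in> C V \<longrightarrow> S @ S' \<in> C V)"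
      unfolding indexing_system_def by blast
    then have "\<And>V. V \<in> Ob T \<Longrightarrow> [] \<in> C V \<and> terminal T V @ terminal T V \<in> C V"
      using trm by blast
    then show "upsilon T C \<inter> nabla T C = Ob T" unfolding upsilon_def nabla_def by auto
  next
    assume a: "upsilon T C \<inter> nabla T C = Ob T"
    have "\<forall>V\<in>Ob T. [] \<in> C V \<and> (\<forall>S S'. S \<in> C V \<longrightarrow> S' \<in> C V \<longrightarrow> S @ S' \<in> C V)"
    proof (intro ballI conjI allI impI)
      fix V assume V: "V \<in> Ob T"
      then show "[] \<in> C V" using a unfolding upsilon_def by blast
      have tt: "terminal T V @ terminal T V \<in> C V" using a V unfolding nabla_def by blast
      fix S S' assume S: "S \<in> C V" and S': "S' \<in> C V"
      define Ts where "Ts = (\<lambda>i::nat. if i = 0 then S else S')"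
      have "orbit_coprod T (terminal T V @ terminal T V) Ts \<in> C V"
        using oc[OF tt] S S' by (auto simp: Ts_def terminal_def nth_Cons split: nat.splits)
      moreover have "orbit_coprod T (terminal T V @ terminal T V) Ts = S @ S'"
      proof -
        have "S \<in> FVOb T V" "S' \<in> FVOb T V" using S S' sub by blast+
        then show ?thesis
          using Ind_id[OF cat, of S V] Ind_id[OF cat, of S' V]
          by (simp add: orbit_coprod_def terminal_def Ts_def upt_rec)
      qed
      ultimately show "S @ S' \<in> C V" by simp
    qed
    then show "indexing_system T C" unfolding indexing_system_def using W by blast
  qed
  show ?thesis using P1 P2 P3 P4 by blast
qed

end
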